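(* Let $A\subset\mathbb{Z}$ be a set with $\dim(A)=1$ and cardinality $k$ that is composed of $s\le k-1$ pairwise disjoint segments $P_1,\dots,P_s$ with $\max P_i<\min P_{i+1}$ for $1\le i<s$. Suppose that every finite set $B\subset\mathbb{Z}$ with $\dim(B)=1$ whose minimum number of disjoint segments in a decomposition is $s-1\le |B|-1$ satisfies $\mathrm{vol}(B)\le 2^{s-2}(|B|-s+1)+1$. If $\mathrm{vol}(A)>2^{s-1}(|A|-s)+1$, then $P_i+P_j<P_i+P_{j+1}$ (i.e. every element of $P_i+P_j$ is smaller than every element of $P_i+P_{j+1}$) for all $1\le i\le s$ and $1\le j<s$.
   Context: A segment is a nonempty set of consecutive integers. Sets $A\subset G$, $B\subset G'$ in abelian groups are Freiman isomorphic of order 2 ($F_2$-isomorphic) if there is a bijection $\phi:A\to B$ with $x+y=z+t\iff\phi(x)+\phi(y)=\phi(z)+\phi(t)$ for all $x,y,z,t\in A$. The dimension $\dim(A)$ is the largest $d$ such that some $B\subset\mathbb{Z}^d$ not contained in a hyperplane is $F_2$-isomorphic to $A$. For a $1$-dimensional $A\subset\mathbb{Z}$, $\mathrm{vol}(A)=\max(\tilde A)+1$ where $\tilde A=(A-\min A)/\gcd(A-\min A)$ (in general the volume is the minimum number of lattice points in the convex hull of a $d$-dimensional $F_2$-isomorphic copy). *)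

theory Defs
  imports Complex_Main "HOL-Library.Function_Algebras"
begin

definition F2_iso :: "'a::plus set \<Rightarrow> 'b::plus set \<Rightarrow> bool" where
  "F2_iso A B \<longleftrightarrow> (\<exists>\<phi>. bij_betw \<phi> A B \<and>
     (\<forall>x\<in>A. \<forall>y\<in>A. \<forall>z\<in>A. \<forall>t\<in>A.
        x + y = z + t \<longleftrightarrow> \<phi> x + \<phi> y = \<phi> z + \<phi> t))"

text \<open>The lattice Z^d, represented as integer vectors indexed by nat vanishing
  from coordinate d on.\<close>
definition lattice :: "nat \<Rightarrow> (nat \<Rightarrow> int) set" where
  "lattice d = {v. \<forall>i\<ge>d. v i = 0}"

definition in_hyperplane :: "nat \<Rightarrow> (nat \<Rightarrow> int) set \<Rightarrow> bool" where
  "in_hyperplane d B \<longleftrightarrow> (\<exists>c :: nat \<Rightarrow> real. \<exists>b :: real. (\<exists>i<d. c i \<noteq> 0) \<and>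
     (\<forall>x\<in>B. (\<Sum>i<d. c i * real_of_int (x i)) = b))"

definition fdim :: "int set \<Rightarrow> nat" where
  "fdim A = (GREATEST d. \<exists>B. B \<subseteq> lattice d \<and> \<not> in_hyperplane d B \<and> F2_iso A B)"

text \<open>Volume of a 1-dimensional set of integers: max of the normalised set plus one.\<close>
definition vol1 :: "int set \<Rightarrow> int" where
  "vol1 A = (Max A - Min A) div Gcd ((\<lambda>a. a - Min A) ` A) + 1"

definition segment :: "int set \<Rightarrow> bool" where
  "segment P \<longleftrightarrow> (\<exists>a b. a \<le> b \<and> P = {a..b})"

definition seg_decomp :: "int set \<Rightarrow> nat \<Rightarrow> (nat \<Rightarrow> int set) \<Rightarrow> bool" where
  "seg_decomp A s P \<longleftrightarrow> (\<forall>i\<in>{1..s}. segment (P i)) \<and>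
     (\<forall>i\<in>{1..<s}. Max (P i) < Min (P (Suc i))) \<and>
     A = (\<Union>i\<in>{1..s}. P i)"

definition nsegs :: "int set \<Rightarrow> nat" where
  "nsegs A = (LEAST n. \<exists>P. seg_decomp A n P)"

end

theory Submission
  imports Defs
begin

lemma lin_dep:
  fixes W :: "(nat \<Rightarrow> real) set"
  shows "finite W \<Longrightarrow> card W < d \<Longrightarrow> \<exists>c. (\<exists>i<d. c i \<noteq> 0) \<and> (\<forall>w\<in>W. (\<Sum>i<d. c i * w i) = 0)"
proof (induction d arbitrary: W)
  case 0 then show ?case by simp
next
  case (Suc d)
  show ?case
  proof (cases "\<forall>w\<in>W. w d = 0")
    case True
    define c :: "nat \<Rightarrow> real" where "c = (\<lambda>i. if i = d then 1 else 0)"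
    have "(\<Sum>i<Suc d. c i * w i) = 0" if "w \<in> W" for w
      using True that by (simp add: c_def)
    moreover have "c d \<noteq> 0" by (simp add: c_def)
    ultimately show ?thesis by blast
  next
    case False
    then obtain w0 where w0: "w0 \<in> W" "w0 d \<noteq> 0" by blast
    define W' where "W' = (\<lambda>u. \<lambda>i. u i - (u d / w0 d) * w0 i) ` (W - {w0})"
    have fW': "finite W'" using Suc.prems by (simp add: W'_def)
    have "card W' \<le> card (W - {w0})" unfolding W'_def by (rule card_image_le) (use Suc.prems in simp)
    also have "\<dots> = card W - 1" using w0 Suc.prems by simp
    finally have cW: "card W' \<le> card W - 1" .
    have "card W > 0" using w0 Suc.prems card_gt_0_iff by blast
    then have "card W' < d" using cW Suc.prems by linarith
    from Suc.IH[OF fW' this] obtain c' where c': "\<exists>i<d. c' i \<noteq> 0" "\<forall>w\<in>W'. (\<Sum>i<d. c' i * w i) = 0"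
      by blast
    define S where "S = (\<Sum>i<d. c' i * w0 i)"
    define c where "c = (\<lambda>i. if i < d then c' i else if i = d then - S / w0 d else 0)"
    have e1: "(\<Sum>i<Suc d. c i * w i) = (\<Sum>i<d. c' i * w i) - S / w0 d * w d" for w
    proof -
      have "(\<Sum>i<d. c i * w i) = (\<Sum>i<d. c' i * w i)" by (rule sum.cong) (auto simp: c_def)
      moreover have "c d = - S / w0 d" by (simp add: c_def)
      ultimately show ?thesis by simp
    qed
    have "(\<Sum>i<Suc d. c i * w i) = 0" if w: "w \<in> W" for w
    proof (cases "w = w0")
      case True
      then show ?thesis using e1 w0 by (simp add: S_def)
    next
      case False
      have "(\<lambda>i. w i - (w d / w0 d) * w0 i) \<in> W'" unfolding W'_def using w False by blast
      then have "(\<Sum>i<d. c' i * (w i - (w d / w0 d) * w0 i)) = 0" using c' by auto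
      then have "(\<Sum>i<d. c' i * w i) - (w d / w0 d) * S = 0"
        by (simp add: S_def right_diff_distrib sum_subtractf sum_distrib_left algebra_simps)
      then have "(\<Sum>i<d. c' i * w i) - S / w0 d * w d = 0" by (simp add: field_simps)
      then show ?thesis by (simp only: e1)
    qed
    moreover have "\<exists>i<Suc d. c i \<noteq> 0" using c' by (auto simp: c_def)
    ultimately show ?thesis by blast
  qed
qed


lemma dim_bound:
  assumes "finite X" "F2_iso X Y" "Y \<subseteq> lattice d" "\<not> in_hyperplane d Y"
  shows "d \<le> card X"
proof (rule ccontr)
  assume "\<not> d \<le> card X"
  then have dl: "card X < d" by simp
  from assms(2) obtain \<phi> where bij: "bij_betw \<phi> X Y" unfolding F2_iso_def by blast
  then have cY: "card Y = card X" by (simp add: bij_betw_same_card)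
  have fY: "finite Y" using bij assms(1) bij_betw_finite by blast
  show False
  proof (cases "Y = {}")
    case True
    have "in_hyperplane d Y" unfolding in_hyperplane_def
      by (rule exI[of _ "\<lambda>_. 1"], rule exI[of _ 0]) (use True dl in auto)
    then show False using assms(4) by simp
  next
    case False
    then obtain y0 where y0: "y0 \<in> Y" by blast
    define W where "W = (\<lambda>y::nat\<Rightarrow>int. \<lambda>i. real_of_int (y i) - real_of_int (y0 i)) ` Y"
    have fW: "finite W" using fY by (simp add: W_def)
    have "card W \<le> card Y" unfolding W_def by (rule card_image_le[OF fY])
    then have "card W < d" using cY dl by simp
    from lin_dep[OF fW this] obtain c where c: "\<exists>i<d. c i \<noteq> 0" "\<forall>w\<in>W. (\<Sum>i<d. c i * w i) = 0"
      by blast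
    have "(\<Sum>i<d. c i * real_of_int (y i)) = (\<Sum>i<d. c i * real_of_int (y0 i))" if "y \<in> Y" for y
    proof -
      have "(\<lambda>i. real_of_int (y i) - real_of_int (y0 i)) \<in> W" using that by (auto simp: W_def)
      then have "(\<Sum>i<d. c i * (real_of_int (y i) - real_of_int (y0 i))) = 0" using c by auto
      then show ?thesis by (simp add: right_diff_distrib sum_subtractf)
    qed
    then have "in_hyperplane d Y" unfolding in_hyperplane_def using c(1) by blast
    then show False using assms(4) by simp
  qed
qed

lemma fdim1_hyper:
  assumes "finite A" "fdim A = 1" "F2_iso A Y" "Y \<subseteq> lattice d" "2 \<le> d"
  shows "in_hyperplane d Y"
proof (rule ccontr)
  assume nh: "\<not> in_hyperplane d Y"
  let ?P = "\<lambda>d. \<exists>B. B \<subseteq> lattice d \<and> \<not> in_hyperplane d B \<and> F2_iso A B"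
  have "?P d" using assms nh by blast
  moreover have "\<And>y. ?P y \<Longrightarrow> y \<le> card A" using dim_bound assms(1) by blast
  ultimately have "d \<le> Greatest ?P" by (rule Greatest_le_nat)
  then have "d \<le> fdim A" unfolding fdim_def .
  then show False using assms by simp
qed

lemma hyper_extend:
  fixes \<psi> :: "int \<Rightarrow> nat \<Rightarrow> int"
  assumes rel: "\<forall>x\<in>Bs. \<forall>y\<in>Bs. \<forall>z\<in>Bs. \<forall>t\<in>Bs. x + y = z + t \<longrightarrow> \<psi> x + \<psi> y = \<psi> z + \<psi> t"
    and sub: "{u..v} \<subseteq> Bs" and uv: "u \<le> v"
    and fu: "(\<Sum>i<d. c i * real_of_int (\<psi> u i)) = \<beta>"
    and fv: "(\<Sum>i<d. c i * real_of_int (\<psi> v i)) = \<beta>"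
    and x: "x \<in> {u..v}"
  shows "(\<Sum>i<d. c i * real_of_int (\<psi> x i)) = \<beta>"
proof -
  define f where "f x = (\<Sum>i<d. c i * real_of_int (\<psi> x i))" for x
  have step: "f (y - 1) + f (y + 1) = 2 * f y" if "u \<le> y - 1" "y + 1 \<le> v" for y
  proof -
    have m: "y - 1 \<in> Bs" "y + 1 \<in> Bs" "y \<in> Bs" using sub that by auto
    have fe: "\<psi> (y - 1) + \<psi> (y + 1) = \<psi> y + \<psi> y"
      using rel[rule_format, OF m(1) m(2) m(3) m(3)] by simp
    have e: "\<psi> (y - 1) i + \<psi> (y + 1) i = 2 * \<psi> y i" for i
      using fun_cong[OF fe, of i] by simp
    have "f (y - 1) + f (y + 1) = (\<Sum>i<d. c i * (real_of_int (\<psi> (y - 1) i) + real_of_int (\<psi> (y + 1) i)))"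
      by (simp add: f_def sum.distrib[symmetric] distrib_left)
    also have "\<dots> = (\<Sum>i<d. 2 * (c i * real_of_int (\<psi> y i)))"
    proof (rule sum.cong)
      fix i show "c i * (real_of_int (\<psi> (y - 1) i) + real_of_int (\<psi> (y + 1) i)) = 2 * (c i * real_of_int (\<psi> y i))"
      proof -
        have "real_of_int (\<psi> (y - 1) i + \<psi> (y + 1) i) = real_of_int (2 * \<psi> y i)" by (simp only: e)
        then have "real_of_int (\<psi> (y - 1) i) + real_of_int (\<psi> (y + 1) i) = 2 * real_of_int (\<psi> y i)" by simp
        then show ?thesis by (simp add: algebra_simps)
      qed
    qed simp
    also have "\<dots> = 2 * f y" by (simp add: f_def sum_distrib_left)
    finally show ?thesis .
  qed
  define \<delta> where "\<delta> = f (u + 1) - f u"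
  have lin: "u + int n + 1 \<le> v \<longrightarrow> f (u + int n) = f u + n * \<delta> \<and> f (u + int n + 1) = f u + (n + 1) * \<delta>" for n
  proof (induction n)
    case 0 then show ?case by (simp add: \<delta>_def)
  next
    case (Suc n)
    show ?case
    proof
      assume h: "u + int (Suc n) + 1 \<le> v"
      then have IH: "f (u + int n) = f u + n * \<delta>" "f (u + int n + 1) = f u + (n + 1) * \<delta>"
        using Suc by auto
      have "f (u + int n + 1 - 1) + f (u + int n + 1 + 1) = 2 * f (u + int n + 1)"
        by (rule step) (use h in auto)
      then have "f (u + int n + 2) = f u + (n + 2) * \<delta>" using IH
        by (simp add: algebra_simps)
      then show "f (u + int (Suc n)) = f u + real (Suc n) * \<delta> \<and>
                 f (u + int (Suc n) + 1) = f u + (real (Suc n) + 1) * \<delta>"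
        using IH by (simp add: algebra_simps)
    qed
  qed
  show ?thesis
  proof (cases "u = v")
    case True then show ?thesis using x fu by (simp add: f_def)
  next
    case False
    then have uv': "u < v" using uv by simp
    define N where "N = nat (v - u - 1)"
    have N: "u + int N + 1 = v" using uv' by (simp add: N_def)
    then have "f v = f u + (N + 1) * \<delta>" using lin[of N] by auto
    then have d0: "\<delta> = 0" using fu fv by (simp add: f_def)
    define m where "m = nat (x - u)"
    have m: "x = u + int m" using x by (simp add: m_def)
    show ?thesis
    proof (cases "x = v")
      case True then show ?thesis using fv by simp
    next
      case False
      then have "u + int m + 1 \<le> v" using x m by auto
      then have "f x = f u" using lin[of m] d0 m by auto
      then show ?thesis using fu by (simp add: f_def)
    qed
  qed
qed

lemma MinMax_iv:
  fixes a b :: int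
  assumes "a \<le> b" shows "Min {a..b} = a" "Max {a..b} = b"
  using assms by (auto intro!: Min_eqI Max_eqI)

lemma segment_iv: "segment S \<Longrightarrow> S = {Min S..Max S} \<and> Min S \<le> Max S"
  unfolding segment_def using MinMax_iv by auto

lemma seg_chain:
  assumes "seg_decomp A s P"
  shows "1 \<le> l \<Longrightarrow> l < l' \<Longrightarrow> l' \<le> s \<Longrightarrow> Max (P l) < Min (P l')"
proof (induction l')
  case 0 then show ?case by simp
next
  case (Suc l')
  have o: "Max (P l') < Min (P (Suc l'))" using assms Suc.prems unfolding seg_decomp_def by auto
  show ?case
  proof (cases "l = l'")
    case True then show ?thesis using o by simp
  next
    case False
    then have "Max (P l) < Min (P l')" using Suc by auto
    moreover have "Min (P l') \<le> Max (P l')"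
    proof -
      have "l' \<in> {1..s}" using Suc.prems False by auto
      then have "segment (P l')" using assms unfolding seg_decomp_def by blast
      then show ?thesis using segment_iv by blast
    qed
    ultimately show ?thesis using o by simp
  qed
qed

lemma seg_lower:
  assumes sd: "seg_decomp B n Q" and cB: "\<forall>r\<le>m. c r \<in> B"
    and hs: "\<forall>r<m. c r < h r \<and> h r < c (Suc r) \<and> h r \<notin> B"
  shows "Suc m \<le> n"
proof -
  have BU: "B = (\<Union>i\<in>{1..n}. Q i)" using sd unfolding seg_decomp_def by simp
  have "\<forall>r. \<exists>l. r \<le> m \<longrightarrow> l \<in> {1..n} \<and> c r \<in> Q l" using cB BU by blast
  then obtain \<sigma> where \<sigma>: "\<And>r. r \<le> m \<Longrightarrow> \<sigma> r \<in> {1..n} \<and> c r \<in> Q (\<sigma> r)" by metis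
  have segQ: "\<And>l. l \<in> {1..n} \<Longrightarrow> \<exists>lo hi. Q l = {lo..hi}" using sd unfolding seg_decomp_def segment_def by blast
  have QB: "\<And>l. l \<in> {1..n} \<Longrightarrow> Q l \<subseteq> B" using BU by blast
  have st: "\<sigma> r < \<sigma> (Suc r)" if r: "r < m" for r
  proof (rule ccontr)
    assume "\<not> \<sigma> r < \<sigma> (Suc r)"
    then consider "\<sigma> r = \<sigma> (Suc r)" | "\<sigma> (Suc r) < \<sigma> r" by linarith
    then show False
    proof cases
      case 1
      have i1: "c r \<in> Q (\<sigma> r)" "c (Suc r) \<in> Q (\<sigma> r)" "\<sigma> r \<in> {1..n}" using \<sigma>[of r] \<sigma>[of "Suc r"] r 1 by auto
      obtain lo hi where lh: "Q (\<sigma> r) = {lo..hi}" using segQ[OF i1(3)] by blast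
      have "h r \<in> Q (\<sigma> r)" using hs r i1 unfolding lh by force
      then show False using QB[OF i1(3)] hs r by blast
    next
      case 2
      have i1: "c r \<in> Q (\<sigma> r)" "c (Suc r) \<in> Q (\<sigma> (Suc r))" "\<sigma> r \<in> {1..n}" "\<sigma> (Suc r) \<in> {1..n}"
        using \<sigma>[of r] \<sigma>[of "Suc r"] r by auto
      have "Max (Q (\<sigma> (Suc r))) < Min (Q (\<sigma> r))" using seg_chain[OF sd, of "\<sigma> (Suc r)" "\<sigma> r"] 2 i1 by auto
      moreover have "c (Suc r) \<le> Max (Q (\<sigma> (Suc r)))" "Min (Q (\<sigma> r)) \<le> c r"
      proof -
        obtain lo hi where lh: "Q (\<sigma> (Suc r)) = {lo..hi}" using segQ[OF i1(4)] by blast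
        obtain lo' hi' where lh': "Q (\<sigma> r) = {lo'..hi'}" using segQ[OF i1(3)] by blast
        show "c (Suc r) \<le> Max (Q (\<sigma> (Suc r)))" using i1(2) unfolding lh by (intro Max_ge) auto
        show "Min (Q (\<sigma> r)) \<le> c r" using i1(1) unfolding lh' by (intro Min_le) auto
      qed
      ultimately show False using hs r by force
    qed
  qed
  have mono: "r < r' \<longrightarrow> r' \<le> m \<longrightarrow> \<sigma> r < \<sigma> r'" for r r'
  proof (induction r')
    case 0 then show ?case by simp
  next
    case (Suc r')
    show ?case
    proof (intro impI)
      assume a: "r < Suc r'" "Suc r' \<le> m"
      have s1: "\<sigma> r' < \<sigma> (Suc r')" using st[of r'] a by simp
      show "\<sigma> r < \<sigma> (Suc r')"
      proof (cases "r = r'")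
        case True then show ?thesis using s1 by simp
      next
        case False then have "\<sigma> r < \<sigma> r'" using Suc.IH a by simp
        then show ?thesis using s1 by simp
      qed
    qed
  qed
  have "inj_on \<sigma> {0..m}"
  proof (rule inj_onI)
    fix r r' assume a: "r \<in> {0..m}" "r' \<in> {0..m}" "\<sigma> r = \<sigma> r'"
    show "r = r'"
    proof (rule ccontr)
      assume "r \<noteq> r'"
      then consider "r < r'" | "r' < r" by linarith
      then show False using mono[of r r'] mono[of r' r] a by cases auto
    qed
  qed
  moreover have "\<sigma> ` {0..m} \<subseteq> {1..n}" using \<sigma> by auto
  ultimately have "card {0..m} \<le> card {1..n}" by (intro card_inj_on_le) auto
  then show ?thesis by simp
qed


lemma fdim_fill:
  fixes A B :: "int set"
  assumes fA: "finite A" and dA: "fdim A = 1" and fB: "finite B"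
    and AB: "(\<lambda>x. 2*x) ` A \<subseteq> B"
    and cover: "\<forall>y\<in>B. \<exists>u v. u \<in> A \<and> v \<in> A \<and> 2*u \<le> y \<and> y \<le> 2*v \<and> {2*u..2*v} \<subseteq> B"
    and two: "p \<in> B" "q \<in> B" "p \<noteq> q"
  shows "fdim B = 1"
  unfolding fdim_def
proof (rule Greatest_equality)
  define \<phi> where "\<phi> = (\<lambda>x::int. \<lambda>i::nat. if i = 0 then x else 0)"
  have inj: "inj_on \<phi> B" by (rule inj_onI) (metis \<phi>_def)
  have "F2_iso B (\<phi> ` B)" unfolding F2_iso_def
  proof (intro exI conjI)
    show "bij_betw \<phi> B (\<phi> ` B)" using inj by (simp add: bij_betw_imageI)
    show "\<forall>x\<in>B. \<forall>y\<in>B. \<forall>z\<in>B. \<forall>t\<in>B. (x + y = (z::int) + t) = (\<phi> x + \<phi> y = \<phi> z + \<phi> t)"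
    proof (intro ballI iffI)
      fix x y z t :: int assume "x + y = z + t" then show "\<phi> x + \<phi> y = \<phi> z + \<phi> t"
        by (auto simp: \<phi>_def fun_eq_iff)
    next
      fix x y z t :: int assume "\<phi> x + \<phi> y = \<phi> z + \<phi> t"
      from fun_cong[OF this, of 0] show "x + y = z + t" by (simp add: \<phi>_def)
    qed
  qed
  moreover have "\<phi> ` B \<subseteq> lattice 1" by (auto simp: \<phi>_def lattice_def)
  moreover have "\<not> in_hyperplane 1 (\<phi> ` B)"
  proof
    assume "in_hyperplane 1 (\<phi> ` B)"
    then obtain c \<beta> where c: "c 0 \<noteq> 0" "\<forall>x\<in>\<phi> ` B. (\<Sum>i<1. c i * real_of_int (x i)) = \<beta>"
      unfolding in_hyperplane_def by auto
    then have "c 0 * real_of_int p = \<beta>" "c 0 * real_of_int q = \<beta>" using two by (auto simp: \<phi>_def)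
    then have "c 0 * real_of_int p = c 0 * real_of_int q" by simp
    then show False using c(1) two(3) by simp
  qed
  ultimately show "\<exists>Y. Y \<subseteq> lattice 1 \<and> \<not> in_hyperplane 1 Y \<and> F2_iso B Y" by blast
next
  fix d assume "\<exists>Y. Y \<subseteq> lattice d \<and> \<not> in_hyperplane d Y \<and> F2_iso B Y"
  then obtain Y where Y: "Y \<subseteq> lattice d" "\<not> in_hyperplane d Y" "F2_iso B Y" by blast
  show "d \<le> 1"
  proof (rule ccontr)
    assume "\<not> d \<le> 1"
    then have d2: "2 \<le> d" by simp
    from Y(3) obtain \<psi> where bij: "bij_betw \<psi> B Y" and
      rel: "\<forall>x\<in>B. \<forall>y\<in>B. \<forall>z\<in>B. \<forall>t\<in>B. (x + y = z + t) = (\<psi> x + \<psi> y = \<psi> z + \<psi> t)"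
      unfolding F2_iso_def by blast
    define \<chi> where "\<chi> x = \<psi> (2 * x)" for x
    have AB': "\<And>x. x \<in> A \<Longrightarrow> 2 * x \<in> B" using AB by blast
    have "inj_on \<chi> A"
    proof (rule inj_onI)
      fix x y assume "x \<in> A" "y \<in> A" "\<chi> x = \<chi> y"
      then have "2 * x = 2 * y" using bij AB' unfolding \<chi>_def bij_betw_def inj_on_def by blast
      then show "x = y" by simp
    qed
    have "F2_iso A (\<chi> ` A)" unfolding F2_iso_def
    proof (intro exI conjI)
      show "bij_betw \<chi> A (\<chi> ` A)" using \<open>inj_on \<chi> A\<close> by (simp add: bij_betw_imageI)
      show "\<forall>x\<in>A. \<forall>y\<in>A. \<forall>z\<in>A. \<forall>t\<in>A. (x + y = z + t) = (\<chi> x + \<chi> y = \<chi> z + \<chi> t)"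
      proof (intro ballI)
        fix x y z t :: int assume h: "x \<in> A" "y \<in> A" "z \<in> A" "t \<in> A"
        have "(x + y = z + t) = (2*x + 2*y = 2*z + 2*t)" by linarith
        also have "\<dots> = (\<chi> x + \<chi> y = \<chi> z + \<chi> t)"
          unfolding \<chi>_def using rel AB' h by blast
        finally show "(x + y = z + t) = (\<chi> x + \<chi> y = \<chi> z + \<chi> t)" .
      qed
    qed
    moreover have "\<chi> ` A \<subseteq> lattice d" using Y(1) bij AB' unfolding \<chi>_def bij_betw_def by blast
    ultimately have "in_hyperplane d (\<chi> ` A)" using fdim1_hyper[OF fA dA _ _ d2] by blast
    then obtain c \<beta> where c: "\<exists>i<d. c i \<noteq> 0" "\<forall>x\<in>\<chi> ` A. (\<Sum>i<d. c i * real_of_int (x i)) = \<beta>"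
      unfolding in_hyperplane_def by blast
    have rel': "\<forall>x\<in>B. \<forall>y\<in>B. \<forall>z\<in>B. \<forall>t\<in>B. x + y = z + t \<longrightarrow> \<psi> x + \<psi> y = \<psi> z + \<psi> t"
      using rel by blast
    have "(\<Sum>i<d. c i * real_of_int (y i)) = \<beta>" if yY: "y \<in> Y" for y
    proof -
      obtain x where x: "x \<in> B" "y = \<psi> x" using bij yY unfolding bij_betw_def by blast
      obtain u v where uv: "u \<in> A" "v \<in> A" "2*u \<le> x" "x \<le> 2*v" "{2*u..2*v} \<subseteq> B" using cover x by blast
      have "(\<Sum>i<d. c i * real_of_int (\<psi> x i)) = \<beta>"
      proof (rule hyper_extend[OF rel' uv(5)])
        show "2 * u \<le> 2 * v" using uv by simp
        show "(\<Sum>i<d. c i * real_of_int (\<psi> (2 * u) i)) = \<beta>" using c(2) uv(1) unfolding \<chi>_def by auto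
        show "(\<Sum>i<d. c i * real_of_int (\<psi> (2 * v) i)) = \<beta>" using c(2) uv(2) unfolding \<chi>_def by auto
        show "x \<in> {2 * u..2 * v}" using uv by simp
      qed
      then show ?thesis using x by simp
    qed
    then have "in_hyperplane d Y" unfolding in_hyperplane_def using c(1) by blast
    then show False using Y(2) by simp
  qed
qed


lemma gcd1:
  fixes A :: "int set"
  assumes "x \<in> A" "x + 1 \<in> A"
  shows "Gcd ((\<lambda>a. a - m) ` A) = 1"
proof -
  let ?G = "Gcd ((\<lambda>a. a - m) ` A)"
  have "?G dvd x - m" "?G dvd x + 1 - m" using assms by (auto intro: Gcd_dvd)
  then have "?G dvd (x + 1 - m) - (x - m)" using dvd_diff by blast
  then have "?G dvd 1" by simp
  then have "\<bar>?G\<bar> = 1" by simp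
  moreover have "\<bar>?G\<bar> = ?G" using normalize_Gcd[of "(\<lambda>a. a - m) ` A"] by (simp only: normalize_int_def)
  ultimately show ?thesis by linarith
qed

theorem lemma3p1:
  fixes A :: "int set" and s :: nat and P :: "nat \<Rightarrow> int set"
  assumes "finite A"
    and "fdim A = 1"
    and "seg_decomp A s P"
    and "int s \<le> int (card A) - 1"
    and "\<forall>B :: int set. finite B \<and> fdim B = 1 \<and> nsegs B = s - 1 \<and>
            int s - 1 \<le> int (card B) - 1 \<longrightarrow>
            vol1 B \<le> 2 ^ (s - 2) * (int (card B) - int s + 1) + 1"
    and "vol1 A > 2 ^ (s - 1) * (int (card A) - int s) + 1"
  shows "\<forall>i\<in>{1..s}. \<forall>j\<in>{1..<s}. \<forall>x\<in>P i. \<forall>y\<in>P j. \<forall>x'\<in>P i. \<forall>y'\<in>P (Suc j).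
           x + y < x' + y'"
proof (rule ccontr)
  assume "\<not> ?thesis"
  then obtain i j x y x' y' where ij: "i \<in> {1..s}" "j \<in> {1..<s}" and
    xy: "x \<in> P i" "y \<in> P j" "x' \<in> P i" "y' \<in> P (Suc j)" "x' + y' \<le> x + y"
    by (auto simp: not_less)
  note sd = assms(3)
  define a where "a l = Min (P l)" for l
  define b where "b l = Max (P l)" for l
  have Pl: "\<And>l. l \<in> {1..s} \<Longrightarrow> P l = {a l..b l} \<and> a l \<le> b l"
    using sd segment_iv unfolding seg_decomp_def a_def b_def by blast
  have ch: "\<And>l l'. 1 \<le> l \<Longrightarrow> l < l' \<Longrightarrow> l' \<le> s \<Longrightarrow> b l < a l'"
    using seg_chain[OF sd] unfolding a_def b_def by blast
  have bmono: "b l \<le> b l'" if "1 \<le> l" "l \<le> l'" "l' \<le> s" for l l'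
  proof (cases "l = l'")
    case False
    then have "b l < a l'" using ch that by simp
    then show ?thesis using Pl[of l'] that by auto
  qed simp
  have AU: "A = (\<Union>l\<in>{1..s}. {a l..b l})" using sd Pl unfolding seg_decomp_def by auto
  have aA: "a l \<in> A" "b l \<in> A" if "l \<in> {1..s}" for l using AU Pl[OF that] that by auto
  have s2: "2 \<le> s" using ij by auto
  have j1: "1 \<le> j" "Suc j \<le> s" using ij by auto
  define g where "g = a (Suc j) - b j"
  have g1: "1 \<le> g" using ch[of j "Suc j"] j1 by (simp add: g_def)
  have gle: "g \<le> b i - a i"
  proof -
    have "y \<le> b j" "a (Suc j) \<le> y'" using xy Pl[of j] Pl[of "Suc j"] j1 by auto
    moreover have "a i \<le> x'" "x \<le> b i" using xy Pl[of i] ij by auto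
    ultimately show ?thesis using xy(5) by (simp add: g_def)
  qed
  have disj: "{a l..b l} \<inter> {a l'..b l'} = {}" if "l \<in> {1..s}" "l' \<in> {1..s}" "l \<noteq> l'" for l l'
  proof (cases "l < l'")
    case True then have "b l < a l'" using ch that by simp
    then show ?thesis by auto
  next
    case False then have "b l' < a l" using ch that by simp
    then show ?thesis by auto
  qed
  have kA: "int (card A) = (\<Sum>l\<in>{1..s}. b l - a l + 1)"
  proof -
    have "card A = (\<Sum>l\<in>{1..s}. card {a l..b l})" unfolding AU
      by (rule card_UN_disjoint) (use disj in auto)
    then have "int (card A) = (\<Sum>l\<in>{1..s}. int (card {a l..b l}))" by simp
    also have "\<dots> = (\<Sum>l\<in>{1..s}. b l - a l + 1)"
      by (rule sum.cong) (use Pl in auto)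
    finally show ?thesis .
  qed
  have kge: "int (card A) \<ge> (b i - a i + 1) + (int s - 1)"
  proof -
    have "(\<Sum>l\<in>{1..s}. b l - a l + 1) = (b i - a i + 1) + (\<Sum>l\<in>{1..s} - {i}. b l - a l + 1)"
      using ij by (simp add: sum.remove)
    moreover have "(\<Sum>l\<in>{1..s} - {i}. b l - a l + 1) \<ge> (\<Sum>l\<in>{1..s} - {i}. (1::int))"
      by (rule sum_mono) (use Pl in auto)
    moreover have "(\<Sum>l\<in>{1..s} - {i}. (1::int)) = int s - 1" using ij by simp
    ultimately show ?thesis using kA by linarith
  qed
  define Q where "Q r = (if r < j then {2 * a r..2 * b r} else if r = j then {2 * a j..2 * b (Suc j)}
      else {2 * a (Suc r)..2 * b (Suc r)})" for r
  define B where "B = (\<Union>r\<in>{1..s-1}. Q r)"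
  define U where "U = (\<Union>l\<in>{1..s}. {2 * a l..2 * b l}) \<union> {2 * b j + 1..2 * a (Suc j) - 1}"
  have ajb: "a j \<le> b (Suc j)" using Pl[of j] Pl[of "Suc j"] ch[of j "Suc j"] j1 by auto
  have Qr: "\<exists>u v. u \<in> A \<and> v \<in> A \<and> u \<le> v \<and> Q r = {2 * u..2 * v}" if r: "r \<in> {1..s-1}" for r
  proof -
    consider "r < j" | "r = j" | "j < r" by linarith
    then show ?thesis
    proof cases
      case 1 then show ?thesis using aA[of r] Pl[of r] r by (auto simp: Q_def)
    next
      case 2 then show ?thesis using aA[of j] aA[of "Suc j"] ajb j1 by (auto simp: Q_def)
    next
      case 3 then show ?thesis using aA[of "Suc r"] Pl[of "Suc r"] r by (auto simp: Q_def)
    qed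
  qed
  have finB: "finite B" unfolding B_def Q_def by auto
  have Uin: "\<And>l z. l \<in> {1..s} \<Longrightarrow> z \<in> {2*a l..2*b l} \<Longrightarrow> z \<in> U" unfolding U_def by blast
  have BU: "B \<subseteq> U"
  proof
    fix z assume "z \<in> B"
    then obtain r where r: "r \<in> {1..s-1}" "z \<in> Q r" unfolding B_def by blast
    consider "r < j" | "r = j" | "j < r" by linarith
    then show "z \<in> U"
    proof cases
      case 1
      have "r \<in> {1..s}" using r by auto
      moreover have "z \<in> {2*a r..2*b r}" using r 1 by (simp add: Q_def)
      ultimately show ?thesis by (rule Uin)
    next
      case 2
      then have z: "2 * a j \<le> z" "z \<le> 2 * b (Suc j)" using r by (auto simp: Q_def)
      consider "z \<le> 2 * b j" | "2 * b j < z \<and> z < 2 * a (Suc j)" | "2 * a (Suc j) \<le> z" by linarith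
      then show ?thesis
      proof cases
        case 1
        have "j \<in> {1..s}" using j1 by auto
        moreover have "z \<in> {2*a j..2*b j}" using z 1 by simp
        ultimately show ?thesis by (rule Uin)
      next
        case 2 then have "z \<in> {2 * b j + 1..2 * a (Suc j) - 1}" by simp
        then show ?thesis unfolding U_def by blast
      next
        case 3
        have "Suc j \<in> {1..s}" using j1 by simp
        moreover have "z \<in> {2*a (Suc j)..2*b (Suc j)}" using z 3 by simp
        ultimately show ?thesis by (rule Uin)
      qed
    next
      case 3
      have "Suc r \<in> {1..s}" using r by auto
      moreover have "z \<in> {2*a (Suc r)..2*b (Suc r)}" using r 3 by (simp add: Q_def)
      ultimately show ?thesis by (rule Uin)
    qed
  qed
  have Bin: "\<And>r z. r \<in> {1..s-1} \<Longrightarrow> z \<in> Q r \<Longrightarrow> z \<in> B" unfolding B_def by blast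
  have AB: "(\<lambda>x. 2 * x) ` A \<subseteq> B"
  proof
    fix z assume "z \<in> (\<lambda>x. 2 * x) ` A"
    then obtain w where w: "w \<in> A" "z = 2 * w" by blast
    then obtain l where l: "l \<in> {1..s}" "a l \<le> w" "w \<le> b l" using AU by auto
    consider "l < j" | "l = j" | "l = Suc j" | "Suc j < l" by linarith
    then show "z \<in> B"
    proof cases
      case 1
      then have "l \<in> {1..s-1}" using l j1 by auto
      moreover have "z \<in> Q l" using 1 l w by (simp add: Q_def)
      ultimately show ?thesis by (rule Bin)
    next
      case 2
      have "j \<in> {1..s-1}" using j1 by auto
      moreover have "b j \<le> b (Suc j)" using bmono j1 by simp
      then have "z \<in> Q j" using 2 l w by (simp add: Q_def)
      ultimately show ?thesis by (rule Bin)
    next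
      case 3
      have "j \<in> {1..s-1}" using j1 by auto
      moreover have "a j \<le> a (Suc j)" using Pl[of j] ch[of j "Suc j"] j1 by auto
      then have "z \<in> Q j" using 3 l w by (simp add: Q_def)
      ultimately show ?thesis by (rule Bin)
    next
      case 4
      then have lm: "l - 1 \<in> {1..s-1}" "j < l - 1" "Suc (l - 1) = l" using l by auto
      then have "z \<in> Q (l - 1)" using l w unfolding Q_def by (simp only: if_False not_less_iff_gr_or_eq) simp
      with lm(1) show ?thesis by (rule Bin)
    qed
  qed
  have cover: "\<forall>z\<in>B. \<exists>u v. u \<in> A \<and> v \<in> A \<and> 2*u \<le> z \<and> z \<le> 2*v \<and> {2*u..2*v} \<subseteq> B"
  proof
    fix z assume "z \<in> B"
    then obtain r where r: "r \<in> {1..s-1}" "z \<in> Q r" unfolding B_def by blast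
    obtain u v where uv: "u \<in> A" "v \<in> A" "u \<le> v" "Q r = {2 * u..2 * v}" using Qr[OF r(1)] by blast
    have "Q r \<subseteq> B" using r unfolding B_def by blast
    then show "\<exists>u v. u \<in> A \<and> v \<in> A \<and> 2*u \<le> z \<and> z \<le> 2*v \<and> {2*u..2*v} \<subseteq> B"
      using uv r by auto
  qed
  have jQ: "j \<in> {1..s-1}" using j1 by auto
  have two: "2 * b j \<in> B" "2 * b j + 1 \<in> B"
  proof -
    have "2 * b j + 1 \<le> 2 * a (Suc j)" using g1 by (simp add: g_def)
    moreover have "a (Suc j) \<le> b (Suc j)" using Pl[of "Suc j"] j1 by auto
    moreover have "a j \<le> b j" using Pl[of j] j1 by auto
    ultimately have "2 * b j \<in> Q j" "2 * b j + 1 \<in> Q j" by (auto simp: Q_def)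
    then show "2 * b j \<in> B" "2 * b j + 1 \<in> B" using jQ unfolding B_def by blast+
  qed
  have fdB: "fdim B = 1" by (rule fdim_fill[OF assms(1) assms(2) finB AB cover two]) simp
  have sdB: "seg_decomp B (s - 1) Q"
    unfolding seg_decomp_def
  proof (intro conjI ballI)
    fix r assume r: "r \<in> {1..s-1}"
    then obtain u v where "u \<le> v" "Q r = {2 * u..2 * v}" using Qr by blast
    then show "segment (Q r)" unfolding segment_def by auto
  next
    fix r assume r: "r \<in> {1..<s-1}"
    have mm: "\<And>u v::int. u \<le> v \<Longrightarrow> Max {2*u..2*v} = 2*v \<and> Min {2*u..2*v} = 2*u"
      using MinMax_iv by simp
    have abl: "\<And>l. 1 \<le> l \<Longrightarrow> l \<le> s \<Longrightarrow> a l \<le> b l" using Pl by auto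
    have rr: "1 \<le> r" "r \<le> s" "Suc r \<le> s" "Suc (Suc r) \<le> s" "1 \<le> Suc r" "1 \<le> Suc (Suc r)" using r by auto
    consider "Suc r < j" | "Suc r = j" | "r = j" | "j < r" by linarith
    then show "Max (Q r) < Min (Q (Suc r))"
    proof cases
      case 1
      have "Max (Q r) = 2 * b r" using 1 mm[OF abl[of r]] rr r by (simp add: Q_def)
      moreover have "Min (Q (Suc r)) = 2 * a (Suc r)" using 1 mm[OF abl[of "Suc r"]] rr r by (simp add: Q_def)
      ultimately show ?thesis using ch[of r "Suc r"] r rr by simp
    next
      case 2
      have "Max (Q r) = 2 * b r" using 2 mm[OF abl[of r]] rr r by (simp add: Q_def)
      moreover have "Min (Q (Suc r)) = 2 * a j" using 2 mm[OF ajb] by (simp add: Q_def)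
      ultimately show ?thesis using ch[of r j] r 2 j1 rr by simp
    next
      case 3
      have "Max (Q r) = 2 * b (Suc j)" using 3 mm[OF ajb] by (simp add: Q_def)
      moreover have "Min (Q (Suc r)) = 2 * a (Suc (Suc j))" using 3 mm[OF abl[of "Suc (Suc j)"]] rr r by (simp add: Q_def)
      ultimately show ?thesis using ch[of "Suc j" "Suc (Suc j)"] r 3 rr by simp
    next
      case 4
      have "Max (Q r) = 2 * b (Suc r)" using 4 mm[OF abl[of "Suc r"]] rr r by (simp add: Q_def)
      moreover have "Min (Q (Suc r)) = 2 * a (Suc (Suc r))" using 4 mm[OF abl[of "Suc (Suc r)"]] rr r by (simp add: Q_def)
      ultimately show ?thesis using ch[of "Suc r" "Suc (Suc r)"] r rr by simp
    qed
  qed (simp add: B_def)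
  have holeU: "2 * b q + 1 \<notin> U" if q: "q \<in> {1..<s}" "q \<noteq> j" for q
  proof
    assume "2 * b q + 1 \<in> U"
    then consider l where "l \<in> {1..s}" "2 * b q + 1 \<in> {2 * a l..2 * b l}"
      | "2 * b q + 1 \<in> {2 * b j + 1..2 * a (Suc j) - 1}" unfolding U_def by blast
    then show False
    proof cases
      case 1
      show False
      proof (cases "l \<le> q")
        case True then have "b l \<le> b q" using bmono 1 q by auto
        then show False using 1 by simp
      next
        case False then have "b q < a l" using ch 1 q by auto
        then show False using 1 by simp
      qed
    next
      case 2
      show False
      proof (cases "q < j")
        case True then have "b q < a j" using ch q j1 by auto
        then show False using 2 Pl[of j] j1 by auto
      next
        case False then have "Suc j \<le> q" using q by auto
        then have "a (Suc j) \<le> b q" using bmono[of "Suc j" q] Pl[of "Suc j"] q by auto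
        then show False using 2 by simp
      qed
    qed
  qed
  have nsB: "nsegs B = s - 1"
    unfolding nsegs_def
  proof (rule Least_equality)
    show "\<exists>P. seg_decomp B (s - 1) P" using sdB by blast
  next
    fix n assume "\<exists>P. seg_decomp B n P"
    then obtain Q' where Q': "seg_decomp B n Q'" by blast
    define idx where "idx r = (if r < j then Suc r else Suc (Suc r))" for r
    define c where "c r = 2 * a (idx r)" for r
    define h where "h r = 2 * b (idx (Suc r) - 1) + 1" for r
    have "Suc (s - 2) \<le> n"
    proof (rule seg_lower[OF Q'])
      show "\<forall>r\<le>s - 2. c r \<in> B"
      proof (intro allI impI)
        fix r assume "r \<le> s - 2"
        then have "idx r \<in> {1..s}" using j1 by (auto simp: idx_def)
        then show "c r \<in> B" using aA AB unfolding c_def by blast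
      qed
      show "\<forall>r<s - 2. c r < h r \<and> h r < c (Suc r) \<and> h r \<notin> B"
      proof (intro allI impI)
        fix r assume r: "r < s - 2"
        define q where "q = idx (Suc r) - 1"
        have q1: "idx r \<le> q" "1 \<le> idx r" "q < s" "Suc q = idx (Suc r)" "q \<noteq> j"
          using r j1 by (auto simp: q_def idx_def)
        have hq: "h r = 2 * b q + 1" by (simp add: h_def q_def)
        have cS: "c (Suc r) = 2 * a (Suc q)" by (simp add: c_def q1(4))
        have "a (idx r) \<le> b (idx r)" using Pl[of "idx r"] q1 by auto
        moreover have "b (idx r) \<le> b q" using bmono q1 by auto
        ultimately have "c r < h r" by (simp add: c_def hq)
        moreover have "b q < a (Suc q)" using ch[of q "Suc q"] q1 by auto
        then have "h r < c (Suc r)" by (simp add: cS hq)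
        moreover have "h r \<notin> B" using holeU[of q] q1 BU hq by auto
        ultimately show "c r < h r \<and> h r < c (Suc r) \<and> h r \<notin> B" by blast
      qed
    qed
    then show "s - 1 \<le> n" using s2 by simp
  qed
  have cardB_le: "int (card B) \<le> 2 * int (card A) - int s + 2 * g - 1"
  proof -
    have "card B \<le> card U" by (rule card_mono[OF _ BU]) (simp add: U_def)
    also have "card U \<le> card (\<Union>l\<in>{1..s}. {2*a l..2*b l}) + card {2*b j+1..2*a(Suc j)-1}"
      unfolding U_def by (rule card_Un_le)
    also have "card (\<Union>l\<in>{1..s}. {2*a l..2*b l}) \<le> (\<Sum>l\<in>{1..s}. card {2*a l..2*b l})"
      by (rule card_UN_le) simp
    finally have "card B \<le> (\<Sum>l\<in>{1..s}. card {2*a l..2*b l}) + card {2*b j+1..2*a(Suc j)-1}"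
      by simp
    then have "int (card B) \<le> (\<Sum>l\<in>{1..s}. int (card {2*a l..2*b l})) + int (card {2*b j+1..2*a(Suc j)-1})"
      by (metis of_nat_add of_nat_le_iff of_nat_sum)
    moreover have "(\<Sum>l\<in>{1..s}. int (card {2*a l..2*b l})) = (\<Sum>l\<in>{1..s}. 2 * (b l - a l + 1) - 1)"
      by (rule sum.cong) (use Pl in auto)
    moreover have "(\<Sum>l\<in>{1..s}. 2 * (b l - a l + 1) - 1) = 2 * (\<Sum>l\<in>{1..s}. b l - a l + 1) - int s"
    proof -
      have "(\<Sum>l\<in>{1..s}. 2 * (b l - a l + 1) - 1) = (\<Sum>l\<in>{1..s}. 2 * (b l - a l + 1)) - (\<Sum>l\<in>{1..s}. (1::int))"
        by (rule sum_subtractf)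
      also have "\<dots> = 2 * (\<Sum>l\<in>{1..s}. b l - a l + 1) - int s" by (simp only: sum_distrib_left[symmetric]) simp
      finally show ?thesis .
    qed
    moreover have "int (card {2*b j+1..2*a(Suc j)-1}) = 2 * g - 1" using g1 by (simp add: g_def)
    ultimately show ?thesis using kA by linarith
  qed
  have cardB_ge: "card A \<le> card B"
  proof -
    have "card ((\<lambda>x. 2 * x) ` A) = card A" by (rule card_image) (auto simp: inj_on_def)
    moreover have "card ((\<lambda>x. 2 * x) ` A) \<le> card B" by (rule card_mono[OF finB AB])
    ultimately show ?thesis by simp
  qed
  have Ane: "A \<noteq> {}" using aA[of i] ij by auto
  have MinA: "Min A \<in> A" "\<And>z. z \<in> A \<Longrightarrow> Min A \<le> z" using assms(1) Ane by auto
  have MaxA: "Max A \<in> A" "\<And>z. z \<in> A \<Longrightarrow> z \<le> Max A" using assms(1) Ane by auto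
  have Ubnd: "2 * Min A \<le> z \<and> z \<le> 2 * Max A" if "z \<in> U" for z
  proof -
    from that consider l where "l \<in> {1..s}" "z \<in> {2 * a l..2 * b l}"
      | "z \<in> {2 * b j + 1..2 * a (Suc j) - 1}" unfolding U_def by blast
    then show ?thesis
    proof cases
      case 1
      then show ?thesis using MinA(2)[of "a l"] MaxA(2)[of "b l"] aA[of l] by auto
    next
      case 2
      then show ?thesis using MinA(2)[of "b j"] MaxA(2)[of "a (Suc j)"] aA[of j] aA[of "Suc j"] j1 by auto
    qed
  qed
  have MinB: "Min B = 2 * Min A"
    by (rule Min_eqI[OF finB]) (use Ubnd BU AB MinA(1) in auto)
  have MaxB: "Max B = 2 * Max A"
    by (rule Max_eqI[OF finB]) (use Ubnd BU AB MaxA(1) in auto)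
  have volA: "vol1 A = Max A - Min A + 1"
  proof -
    have "a i + 1 \<le> b i" using g1 gle by simp
    moreover have PA: "\<And>z. z \<in> {a i..b i} \<Longrightarrow> z \<in> A" using AU ij by blast
    ultimately have "a i \<in> A" "a i + 1 \<in> A" by auto
    then have "Gcd ((\<lambda>x. x - Min A) ` A) = 1" by (rule gcd1)
    then show ?thesis unfolding vol1_def by simp
  qed
  have volB: "vol1 B = 2 * (Max A - Min A) + 1"
  proof -
    have "Gcd ((\<lambda>x. x - Min B) ` B) = 1" using two by (rule gcd1)
    then show ?thesis unfolding vol1_def MinB MaxB by simp
  qed
  have prem: "finite B \<and> fdim B = 1 \<and> nsegs B = s - 1 \<and> int s - 1 \<le> int (card B) - 1"
    using finB fdB nsB cardB_ge assms(4) by simp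
  have "vol1 B \<le> 2 ^ (s - 2) * (int (card B) - int s + 1) + 1"
    using assms(5) prem by blast
  define p :: int where "p = 2 ^ (s - 2)"
  have p0: "p \<ge> 0" by (simp add: p_def)
  have ss: "s - 1 = Suc (s - 2)" using s2 by simp
  have p2: "(2::int) ^ (s - 1) = 2 * p" unfolding p_def ss by simp
  define k where "k = int (card A)"
  define M where "M = Max A - Min A"
  have h1: "2 * M \<le> p * (int (card B) - int s + 1)"
    using \<open>vol1 B \<le> _\<close> volB unfolding p_def M_def by simp
  have h2: "p * (int (card B) - int s + 1) \<le> p * (2 * k - 2 * int s + 2 * g)"
    by (rule mult_left_mono) (use cardB_le p0 in \<open>auto simp: k_def\<close>)
  have gk: "g \<le> k - int s" using gle kge unfolding k_def by linarith
  have h3: "p * (2 * k - 2 * int s + 2 * g) \<le> p * (4 * (k - int s))"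
    by (rule mult_left_mono) (use gk p0 in auto)
  have h4: "M > 2 * p * (k - int s)" using assms(6) volA p2 unfolding M_def k_def by simp
  have "p * (4 * (k - int s)) = 2 * (2 * p * (k - int s))" by (simp add: algebra_simps)
  then show False using h1 h2 h3 h4 by linarith
qed
end
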